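(* Let $n\ge 1$. For a permutation $\pi\in S_n$, let $\Phi_2(\pi)$ be the deco polyomino of height $n$ whose code $(a_n,a_{n-1},\ldots,a_1)$ equals the right inversion vector $(c_1,c_2,\ldots,c_n)$ of $\pi$, i.e. $a_{n+1-i}=c_i$ for $i=1,\ldots,n$. Then $\pi$ is $321$-avoiding if and only if $\Phi_2(\pi)$ is a parallelogram polyomino.
   Context: Cells are unit squares $[i,i+1]\times[j,j+1]$ with integer $i,j$; a polyomino is a finite edge-connected set of cells, up to translation. A directed polyomino has a distinguished cell (the source) such that every cell can be reached from the source by a path of cells moving only North or East inside the polyomino. It is column-convex if each column (intersection with a vertical strip $[i,i+1]\times\mathbb{R}$) is connected. The (directed) height of a directed polyomino is the number of distinct diagonal lines $x+y=\text{const}$ passing through centers of its cells. A deco polyomino is a directed column-convex polyomino whose height is attained only in its last (rightmost) column, i.e. cells on the maximal diagonal lie only in the last column. Every deco polyomino of height $n$ is built uniquely by a sequence of $n$ steps starting from the empty polyomino; at step $j$ ($j=1,\ldots,n$) one performs either an elevation (add a cell at the bottom of the leftmost column of the current polyomino; step 1 is always of this kind) or a column pasting (add a new column of $k$ cells, $1\le k\le j-1$, to the left of the current polyomino so that the bottoms of the first two columns lie at the same level). Set $a_j=0$ for an elevation and $a_j=k$ for pasting a column of length $k$; the code of the polyomino is $(a_n,a_{n-1},\ldots,a_1)$, with $0\le a_j\le j-1$, and this gives a bijection between deco polyominoes of height $n$ and such sequences. The right inversion vector of $\pi=\pi_1\cdots\pi_n$ is $(c_1,\ldots,c_n)$ with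 $c_i=\#\{j>i:\pi_j<\pi_i\}$; it determines $\pi$ uniquely and $0\le c_i\le n-i$. A permutation is $321$-avoiding if there are no indices $i<j<k$ with $\pi_i>\pi_j>\pi_k$. A parallelogram polyomino is a polyomino bounded by two lattice paths using steps $(1,0)$ and $(0,1)$ which intersect only at their common origin and common endpoint. *)

theory Defs
  imports "HOL-Combinatorics.Combinatorics"
begin

type_synonym cell = "int \<times> int"
  (* the cell (i,j) is the unit square [i,i+1] x [j,j+1] *)

text \<open>The argument a = 0 is an elevation (add a cell at the
bottom of the leftmost column; from the empty polyomino this creates the first cell);
a = k > 0 pastes a column of k cells to the left of the leftmost column, with its bottom
at the level of the bottom of the (previously) leftmost column.\<close>
definition deco_step :: "cell set \<Rightarrow> nat \<Rightarrow> cell set" where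
  "deco_step P a =
     (if P = {} then {(0,0)}
      else let c = Min (fst ` P); b = Min {y. (c, y) \<in> P} in
        if a = 0 then insert (c, b - 1) P
        else P \<union> {(c - 1, b + int t) | t. t < a})"

text \<open>The deco polyomino whose construction steps are given in order
step 1, step 2, ..., step n, i.e. the list [a_1, ..., a_n]; its code is (a_n, ..., a_1).\<close>
definition deco_of_steps :: "nat list \<Rightarrow> cell set" where
  "deco_of_steps as = foldl deco_step {} as"

definition right_inv :: "(nat \<Rightarrow> nat) \<Rightarrow> nat \<Rightarrow> nat \<Rightarrow> nat" where
  "right_inv \<pi> n i = card {j. i < j \<and> j \<le> n \<and> \<pi> j < \<pi> i}"

definition avoids_321 :: "(nat \<Rightarrow> nat) \<Rightarrow> nat \<Rightarrow> bool" where
  "avoids_321 \<pi> n \<longleftrightarrow>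
     \<not> (\<exists>i j k. 1 \<le> i \<and> i < j \<and> j < k \<and> k \<le> n \<and> \<pi> i > \<pi> j \<and> \<pi> j > \<pi> k)"

definition Phi2 :: "(nat \<Rightarrow> nat) \<Rightarrow> nat \<Rightarrow> cell set" where
  "Phi2 \<pi> n = deco_of_steps (map (\<lambda>j. right_inv \<pi> n (n + 1 - j)) [1..<n+1])"

text \<open>Lattice paths: True = east step (1,0), False = north step (0,1).\<close>
fun path_pts :: "cell \<Rightarrow> bool list \<Rightarrow> cell list" where
  "path_pts (x, y) [] = [(x, y)]"
| "path_pts (x, y) (True # ss) = (x, y) # path_pts (x + 1, y) ss"
| "path_pts (x, y) (False # ss) = (x, y) # path_pts (x, y + 1) ss"

fun east_starts :: "cell \<Rightarrow> bool list \<Rightarrow> cell set" where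
  "east_starts (x, y) [] = {}"
| "east_starts (x, y) (True # ss) = insert (x, y) (east_starts (x + 1, y) ss)"
| "east_starts (x, y) (False # ss) = east_starts (x, y + 1) ss"

text \<open>P is the set of cells enclosed by two lattice paths with a common origin and
common endpoint that meet only there: in every column i, the cells between the
east step of the lower path p and the east step of the upper path q.\<close>
definition parallelogram_polyomino :: "cell set \<Rightarrow> bool" where
  "parallelogram_polyomino P \<longleftrightarrow>
     (\<exists>s p q. p \<noteq> [] \<and> length p = length q \<and>
        last (path_pts s p) = last (path_pts s q) \<and>
        set (path_pts s p) \<inter> set (path_pts s q) = {s, last (path_pts s p)} \<and>
        P = {(i, j). \<exists>y1 y2. (i, y1) \<in> east_starts s p \<and> (i, y2) \<in> east_starts s q
                             \<and> y1 \<le> j \<and> j < y2})"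

end

theory Submission
  imports Defs
begin


lemma pts_ne[simp]: "path_pts s ss \<noteq> []"
  by (induction s ss rule: path_pts.induct) auto

lemma pts_ge: "(a,b') \<in> set (path_pts (x,y) ss) \<Longrightarrow> x \<le> a \<and> y \<le> b'"
proof (induction "(x,y)" ss arbitrary: x y rule: path_pts.induct)
  case 1 then show ?case by simp
next
  case (2 ss x y) then show ?case by fastforce
next
  case (3 ss x y) then show ?case by fastforce
qed

lemma es_ge: "(a,b') \<in> east_starts (x,y) ss \<Longrightarrow> x \<le> a \<and> y \<le> b'"
proof (induction "(x,y)" ss arbitrary: x y rule: east_starts.induct)
  case 1 then show ?case by simp
next
  case (2 ss x y) then show ?case by fastforce
next
  case (3 ss x y) then show ?case by fastforce
qed

lemma es_mono: "(a,b1) \<in> east_starts (x,y) ss \<Longrightarrow> (a',b2) \<in> east_starts (x,y) ss \<Longrightarrow> a < a' \<Longrightarrow> b1 \<le> b2"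
proof (induction "(x,y)" ss arbitrary: x y rule: east_starts.induct)
  case 1 then show ?case by simp
next
  case (2 ss x y) then show ?case using es_ge by fastforce
next
  case (3 ss x y) then show ?case by fastforce
qed

lemma es_rep: "east_starts (x,y) (replicate h False @ ss) = east_starts (x, y + int h) ss"
  by (induction h arbitrary: y) (auto simp: add.assoc)

lemma pts_rep: "set (path_pts (x,y) (replicate h False @ ss)) = Pair x ` {y..<y + int h} \<union> set (path_pts (x, y + int h) ss)"
proof (induction h arbitrary: y)
  case 0 then show ?case by auto
next
  case (Suc h) then show ?case by (auto simp: add.assoc image_iff)
qed

lemma last_rep: "last (path_pts (x,y) (replicate h False @ ss)) = last (path_pts (x, y + int h) ss)"
  by (induction h arbitrary: y) (auto simp: add.assoc)

definition R :: "cell set \<Rightarrow> cell set \<Rightarrow> cell set" where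
  "R A B = {(i, j). \<exists>y1 y2. (i, y1) \<in> A \<and> (i, y2) \<in> B \<and> y1 \<le> j \<and> j < y2}"

lemma R_insert:
  assumes "\<forall>(x,y)\<in>A. x \<noteq> c" "\<forall>(x,y)\<in>B. x \<noteq> c"
  shows "R (insert (c,y1) A) (insert (c,y2) B) = Pair c ` {y1..<y2} \<union> R A B"
  using assms unfolding R_def apply (auto simp: image_iff)
  by (rule exI[of _ y1]) auto

definition Fbad :: "cell set \<Rightarrow> bool" where
  "Fbad P \<longleftrightarrow> (\<exists>x y y'. y' \<le> y \<and> (x,y) \<in> P \<and> (x+1,y') \<in> P \<and> (x+1,y) \<notin> P)"

lemma Fbad_not_para: "Fbad P \<Longrightarrow> \<not> parallelogram_polyomino P"
proof
  assume F: "Fbad P" and pp: "parallelogram_polyomino P"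
  then obtain s p q where P: "P = R (east_starts s p) (east_starts s q)"
    unfolding parallelogram_polyomino_def R_def by blast
  obtain s1 s2 where s: "s = (s1,s2)" by fastforce
  from F obtain x y y' where "y' \<le> y" "(x,y) \<in> P" "(x+1,y') \<in> P" "(x+1,y) \<notin> P"
    unfolding Fbad_def by blast
  then obtain y2 u1 u2 where "(x,y2) \<in> east_starts s q" "y < y2"
     "(x+1,u1) \<in> east_starts s p" "(x+1,u2) \<in> east_starts s q" "u1 \<le> y'" "y' < u2"
     "\<not> (u1 \<le> y \<and> y < u2)"
    unfolding P R_def by blast
  moreover have "y2 \<le> u2" using es_mono[of x y2 s1 s2 q "x+1" u2] calculation s by simp
  ultimately show False using \<open>y' \<le> y\<close> by linarith
qed

definition Inv :: "cell set \<Rightarrow> nat \<Rightarrow> int \<Rightarrow> int \<Rightarrow> bool list \<Rightarrow> bool list \<Rightarrow> bool" where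
  "Inv P h c b p q \<longleftrightarrow> h \<ge> 1 \<and> finite P \<and> (\<forall>x y. (x,y) \<in> P \<longrightarrow> c \<le> x)
    \<and> (\<forall>y. (c, y) \<in> P \<longleftrightarrow> b \<le> y \<and> y < b + int h)
    \<and> (\<exists>pr qr. p = True # pr \<and> q = replicate h False @ True # qr)
    \<and> length p = length q \<and> last (path_pts (c,b) p) = last (path_pts (c,b) q)
    \<and> set (path_pts (c,b) p) \<inter> set (path_pts (c,b) q) = {(c,b), last (path_pts (c,b) p)}
    \<and> P = R (east_starts (c,b) p) (east_starts (c,b) q)"

lemma Inv_para: assumes "Inv P h c b p q" shows "parallelogram_polyomino P"
proof -
  have "p \<noteq> []" using assms unfolding Inv_def by auto
  then show ?thesis using assms unfolding parallelogram_polyomino_def Inv_def R_def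
    by (intro exI[of _ "(c,b)"] exI[of _ p] exI[of _ q]) simp
qed

lemma Inv_min: assumes "Inv P h c b p q"
  shows "P \<noteq> {}" "Min (fst ` P) = c" "Min {y. (c,y) \<in> P} = b"
proof -
  from assms have f: "finite P" and lo: "\<forall>x y. (x,y) \<in> P \<longrightarrow> c \<le> x"
    and col: "\<forall>y. (c, y) \<in> P \<longleftrightarrow> b \<le> y \<and> y < b + int h" and h: "h \<ge> 1"
    unfolding Inv_def by blast+
  have cb: "(c,b) \<in> P" using col[rule_format, of b] h by simp
  then show "P \<noteq> {}" by auto
  show "Min (fst ` P) = c"
  proof (rule Min_eqI)
    show "finite (fst ` P)" using f by simp
    show "c \<in> fst ` P" using cb by force
    fix z assume "z \<in> fst ` P" then show "c \<le> z" using lo by auto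
  qed
  have e: "{y. (c,y) \<in> P} = {b..<b + int h}" using col by (simp add: set_eq_iff)
  show "Min {y. (c,y) \<in> P} = b" unfolding e by (rule Min_eqI) (use h in auto)
qed

lemma Inv_base: "Inv {(0,0)} 1 0 0 [True, False] [False, True]"
  unfolding Inv_def R_def by (simp add: set_eq_iff) arith

lemma InvD: assumes "Inv P h c b p q"
  obtains pr qr where "h \<ge> 1" "finite P" "\<forall>x y. (x,y) \<in> P \<longrightarrow> c \<le> x"
    "\<forall>y. (c, y) \<in> P \<longleftrightarrow> b \<le> y \<and> y < b + int h"
    "p = True # pr" "q = replicate h False @ True # qr"
    "length p = length q" "last (path_pts (c,b) p) = last (path_pts (c,b) q)"
    "set (path_pts (c,b) p) \<inter> set (path_pts (c,b) q) = {(c,b), last (path_pts (c,b) p)}"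
    "P = R (east_starts (c,b) p) (east_starts (c,b) q)"
  using assms unfolding Inv_def by blast

lemma es_q: "east_starts (c,b) (replicate h False @ True # qr) = insert (c, b + int h) (east_starts (c+1, b + int h) qr)"
  by (simp add: es_rep)

lemma es_x_ne: "\<forall>(x,y)\<in>east_starts (c+1,b) ss. x \<noteq> c"
  using es_ge by fastforce

lemma pts_x_ne: "(c,y) \<notin> set (path_pts (c+1,b) ss)"
  using pts_ge by fastforce

lemma last_in: "last (path_pts s ss) \<in> set (path_pts s ss)"
  using pts_ne last_in_set by blast

lemma set_aux1: "insert a X \<inter> Q = {a,e} \<Longrightarrow> a \<notin> X \<Longrightarrow> e \<in> X \<Longrightarrow> X \<inter> Q = {e}"
  by (auto simp: set_eq_iff)

lemma set_aux2: "X \<inter> Q = {e} \<Longrightarrow> v \<notin> Q \<Longrightarrow> insert u (insert v X) \<inter> insert u Q = {u, e}"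
  by (auto simp: set_eq_iff)

lemma Inv_elev: assumes "Inv P h c b p q"
  shows "deco_step P 0 = insert (c,b-1) P"
    "\<exists>p' q'. Inv (insert (c,b-1) P) (Suc h) c (b-1) p' q'"
proof -
  show "deco_step P 0 = insert (c,b-1) P"
    using Inv_min[OF assms] unfolding deco_step_def by (simp add: Let_def)
  obtain pr qr where h: "h \<ge> 1" and f: "finite P" and lo: "\<forall>x y. (x,y) \<in> P \<longrightarrow> c \<le> x"
    and col: "\<forall>y. (c, y) \<in> P \<longleftrightarrow> b \<le> y \<and> y < b + int h"
    and p: "p = True # pr" and q: "q = replicate h False @ True # qr"
    and len: "length p = length q" and la: "last (path_pts (c,b) p) = last (path_pts (c,b) q)"
    and cap: "set (path_pts (c,b) p) \<inter> set (path_pts (c,b) q) = {(c,b), last (path_pts (c,b) p)}"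
    and P: "P = R (east_starts (c,b) p) (east_starts (c,b) q)"
    using InvD[OF assms] by metis
  define p' where "p' = True # False # pr"
  define q' where "q' = False # q"
  define A where "A = east_starts (c+1,b) pr"
  define B where "B = east_starts (c+1,b + int h) qr"
  have EA: "\<forall>(x,y)\<in>A. x \<noteq> c" unfolding A_def by (rule es_x_ne)
  have EB: "\<forall>(x,y)\<in>B. x \<noteq> c" unfolding B_def by (rule es_x_ne)
  have P2: "P = Pair c ` {b..<b + int h} \<union> R A B"
    unfolding P p q es_q A_def B_def by (simp add: R_insert[OF es_x_ne es_x_ne])
  have R2: "R (east_starts (c,b-1) p') (east_starts (c,b-1) q') = Pair c ` {b-1..<b + int h} \<union> R A B"
    unfolding p'_def q'_def q A_def B_def by (simp add: es_q R_insert[OF es_x_ne es_x_ne])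
  have iv: "{b-1..<b + int h} = insert (b-1) {b..<b + int h}" using h by auto
  have reg: "insert (c,b-1) P = R (east_starts (c,b-1) p') (east_starts (c,b-1) q')"
    unfolding R2 P2 iv by simp
  define e where "e = last (path_pts (c+1,b) pr)"
  have e1: "last (path_pts (c,b) p) = e" unfolding p e_def by simp
  have e2: "e \<in> set (path_pts (c+1,b) pr)" unfolding e_def by (rule last_in)
  have n1: "(c+1,b-1) \<notin> set (path_pts (c,b) q)" using pts_ge by fastforce
  have n2: "(c,b) \<notin> set (path_pts (c+1,b) pr)" by (rule pts_x_ne)
  have cap0: "insert (c,b) (set (path_pts (c+1,b) pr)) \<inter> set (path_pts (c,b) q) = {(c,b), e}"
    using cap e1 p by simp
  have cap': "set (path_pts (c,b-1) p') \<inter> set (path_pts (c,b-1) q') = {(c,b-1), last (path_pts (c,b-1) p')}"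
  proof -
    have "set (path_pts (c,b-1) p') = insert (c,b-1) (insert (c+1,b-1) (set (path_pts (c+1,b) pr)))"
      unfolding p'_def by simp
    moreover have "set (path_pts (c,b-1) q') = insert (c,b-1) (set (path_pts (c,b) q))"
      unfolding q'_def by simp
    moreover have "last (path_pts (c,b-1) p') = e" unfolding p'_def e_def by simp
    moreover have XQ: "set (path_pts (c+1,b) pr) \<inter> set (path_pts (c,b) q) = {e}"
      by (rule set_aux1[OF cap0 n2 e2])
    ultimately show ?thesis using set_aux2[OF XQ n1] by simp
  qed
  have "Inv (insert (c,b-1) P) (Suc h) c (b-1) p' q'"
    unfolding Inv_def
  proof (intro conjI)
    show "\<forall>x y. (x, y) \<in> insert (c, b - 1) P \<longrightarrow> c \<le> x" using lo by auto
    show "\<forall>y. ((c, y) \<in> insert (c, b - 1) P) = (b - 1 \<le> y \<and> y < b - 1 + int (Suc h))"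
      using col by simp arith
    show "\<exists>pr qr. p' = True # pr \<and> q' = replicate (Suc h) False @ True # qr"
      unfolding p'_def q'_def q by simp
    show "length p' = length q'" using len unfolding p'_def q'_def p by simp
    show "last (path_pts (c, b - 1) p') = last (path_pts (c, b - 1) q')"
      using la unfolding p'_def q'_def p by simp
    show "1 \<le> Suc h" by simp
    show "finite (insert (c, b - 1) P)" using f by simp
    show "set (path_pts (c, b - 1) p') \<inter> set (path_pts (c, b - 1) q') = {(c, b - 1), last (path_pts (c, b - 1) p')}" by (rule cap')
    show "insert (c, b - 1) P = R (east_starts (c, b - 1) p') (east_starts (c, b - 1) q')" by (rule reg)
  qed
  then show "\<exists>p' q'. Inv (insert (c,b-1) P) (Suc h) c (b-1) p' q'" by blast
qed

lemma set_aux3: "Sp \<inter> Sq = {a,e} \<Longrightarrow> T \<subseteq> Sq \<Longrightarrow> a \<notin> T \<Longrightarrow> e \<in> T \<Longrightarrow> e \<in> Sp \<Longrightarrow> Sp \<inter> T = {e}"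
  by (auto simp: set_eq_iff)

lemma set_aux4: "Sp \<inter> Y = {} \<Longrightarrow> Sp \<inter> Z = {} \<Longrightarrow> Sp \<inter> T = {e} \<Longrightarrow> u \<in> Y
  \<Longrightarrow> insert u Sp \<inter> (Y \<union> Z \<union> T) = {u, e}"
  by (auto simp: set_eq_iff)

lemma disj_aux: "(\<And>x y. (x,y)\<in>S \<Longrightarrow> c \<le> x) \<Longrightarrow> (\<And>x y. (x,y) \<in> Y \<Longrightarrow> x < (c::int)) \<Longrightarrow> S \<inter> Y = {}"
  by fastforce

lemma es_x_ne': "\<forall>(x,y)\<in>east_starts (c,b) ss. x \<noteq> c - 1"
  using es_ge by fastforce

lemma col_set: "{((c::int) - 1, b + int t) |t. t < k} = Pair (c - 1) ` {b..<b + int k}"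
proof (rule set_eqI)
  fix z :: cell
  obtain x y where z: "z = (x,y)" by fastforce
  have "(\<exists>t. y = b + int t \<and> t < k) \<longleftrightarrow> b \<le> y \<and> y < b + int k"
  proof
    assume "b \<le> y \<and> y < b + int k" then show "\<exists>t. y = b + int t \<and> t < k"
      by (intro exI[of _ "nat (y - b)"]) auto
  qed auto
  then show "z \<in> {(c - 1, b + int t) |t. t < k} \<longleftrightarrow> z \<in> Pair (c - 1) ` {b..<b + int k}"
    unfolding z by (auto simp: image_iff)
qed

lemma Inv_paste: assumes "Inv P h c b p q" "1 \<le> k" "k \<le> h"
  shows "deco_step P k = P \<union> Pair (c - 1) ` {b..<b + int k}"
    "\<exists>p' q'. Inv (P \<union> Pair (c - 1) ` {b..<b + int k}) k (c - 1) b p' q'"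
proof -
  show "deco_step P k = P \<union> Pair (c - 1) ` {b..<b + int k}"
    using Inv_min[OF assms(1)] assms(2) unfolding deco_step_def by (simp add: Let_def col_set)
  obtain pr qr where h: "h \<ge> 1" and f: "finite P" and lo: "\<forall>x y. (x,y) \<in> P \<longrightarrow> c \<le> x"
    and col: "\<forall>y. (c, y) \<in> P \<longleftrightarrow> b \<le> y \<and> y < b + int h"
    and p: "p = True # pr" and q: "q = replicate h False @ True # qr"
    and len: "length p = length q" and la: "last (path_pts (c,b) p) = last (path_pts (c,b) q)"
    and cap: "set (path_pts (c,b) p) \<inter> set (path_pts (c,b) q) = {(c,b), last (path_pts (c,b) p)}"
    and P: "P = R (east_starts (c,b) p) (east_starts (c,b) q)"
    using InvD[OF assms(1)] by metis
  define qr' where "qr' = replicate (h - k) False @ True # qr"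
  define p' where "p' = True # p"
  define q' where "q' = replicate k False @ True # qr'"
  have hk: "b + int k + int (h - k) = b + int h" using assms by simp
  have Eq: "east_starts (c, b + int k) qr' = east_starts (c,b) q"
    unfolding qr'_def q by (simp add: es_rep hk)
  have reg: "P \<union> Pair (c - 1) ` {b..<b + int k} = R (east_starts (c - 1,b) p') (east_starts (c - 1,b) q')"
  proof -
    have "R (east_starts (c - 1,b) p') (east_starts (c - 1,b) q')
       = R (insert (c-1,b) (east_starts (c,b) p)) (insert (c-1, b + int k) (east_starts (c,b) q))"
      unfolding p'_def q'_def by (simp add: es_rep Eq)
    also have "\<dots> = Pair (c - 1) ` {b..<b + int k} \<union> P"
      unfolding P by (rule R_insert[OF es_x_ne' es_x_ne'])
    finally show ?thesis by auto
  qed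
  define e where "e = last (path_pts (c,b) p)"
  define T where "T = set (path_pts (c, b + int h) (True # qr))"
  define Y where "Y = insert (c - 1, b + int k) (Pair (c - 1) ` {b..<b + int k})"
  define Z where "Z = Pair c ` {b + int k..<b + int h}"
  have Sq: "set (path_pts (c,b) q) = Pair c ` {b..<b + int h} \<union> T"
    unfolding q T_def by (rule pts_rep)
  have Sq': "set (path_pts (c - 1,b) q') = Y \<union> Z \<union> T"
  proof -
    have "set (path_pts (c - 1,b) q') = Pair (c - 1) ` {b..<b + int k} \<union>
       insert (c - 1, b + int k) (set (path_pts (c, b + int k) qr'))"
      unfolding q'_def by (simp add: pts_rep)
    also have "set (path_pts (c, b + int k) qr') = Z \<union> T"
      unfolding qr'_def Z_def T_def pts_rep hk by simp
    finally show ?thesis unfolding Y_def by auto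
  qed
  have eT: "e \<in> T" unfolding e_def la q T_def last_rep by (rule last_in)
  have eSp: "e \<in> set (path_pts (c,b) p)" unfolding e_def by (rule last_in)
  have aT: "(c,b) \<notin> T" unfolding T_def using pts_ge h by fastforce
  have TS: "T \<subseteq> set (path_pts (c,b) q)" unfolding Sq by blast
  have SpT: "set (path_pts (c,b) p) \<inter> T = {e}"
    by (rule set_aux3[OF cap[folded e_def] TS aT eT eSp])
  have SpY: "set (path_pts (c,b) p) \<inter> Y = {}"
  proof (rule disj_aux)
    show "\<And>x y. (x, y) \<in> set (path_pts (c, b) p) \<Longrightarrow> c \<le> x" using pts_ge by blast
    show "\<And>x y. (x, y) \<in> Y \<Longrightarrow> x < c" unfolding Y_def by auto
  qed
  have SpZ: "set (path_pts (c,b) p) \<inter> Z = {}"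
  proof -
    have "set (path_pts (c,b) p) = insert (c,b) (set (path_pts (c+1,b) pr))" unfolding p by simp
    moreover have "(c,b) \<notin> Z" unfolding Z_def using assms(2) by (simp add: image_iff)
    moreover have "set (path_pts (c+1,b) pr) \<inter> Z = {}"
    proof (rule disj_aux)
      show "\<And>x y. (x, y) \<in> set (path_pts (c+1, b) pr) \<Longrightarrow> c + 1 \<le> x" using pts_ge by blast
      show "\<And>x y. (x, y) \<in> Z \<Longrightarrow> x < c + 1" unfolding Z_def by auto
    qed
    ultimately show ?thesis by (simp add: Int_insert_left)
  qed
  have uY: "(c - 1, b) \<in> Y" unfolding Y_def using assms(2) by (simp add: image_iff)
  have cap': "set (path_pts (c - 1,b) p') \<inter> set (path_pts (c - 1,b) q') = {(c - 1,b), last (path_pts (c - 1,b) p')}"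
  proof -
    have "set (path_pts (c - 1,b) p') = insert (c - 1, b) (set (path_pts (c,b) p))"
      unfolding p'_def by simp
    moreover have "last (path_pts (c - 1,b) p') = e" unfolding p'_def e_def by simp
    ultimately show ?thesis unfolding Sq' using set_aux4[OF SpY SpZ SpT uY] by simp
  qed
  have "Inv (P \<union> Pair (c - 1) ` {b..<b + int k}) k (c - 1) b p' q'"
    unfolding Inv_def
  proof (intro conjI)
    show "1 \<le> k" by (rule assms(2))
    show "finite (P \<union> Pair (c - 1) ` {b..<b + int k})" using f by simp
    show "\<forall>x y. (x, y) \<in> P \<union> Pair (c - 1) ` {b..<b + int k} \<longrightarrow> c - 1 \<le> x"
    proof (intro allI impI)
      fix x y assume "(x, y) \<in> P \<union> Pair (c - 1) ` {b..<b + int k}"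
      then show "c - 1 \<le> x"
      proof
        assume "(x,y) \<in> P" then show ?thesis using lo by auto
      qed auto
    qed
    show "\<forall>y. ((c - 1, y) \<in> P \<union> Pair (c - 1) ` {b..<b + int k}) = (b \<le> y \<and> y < b + int k)"
    proof
      fix y
      have "(c - 1, y) \<notin> P" using lo by auto
      then show "((c - 1, y) \<in> P \<union> Pair (c - 1) ` {b..<b + int k}) = (b \<le> y \<and> y < b + int k)"
        by (auto simp: image_iff)
    qed
    show "\<exists>pr qr. p' = True # pr \<and> q' = replicate k False @ True # qr"
      unfolding p'_def q'_def by simp
    show "length p' = length q'" using len assms unfolding p'_def q'_def qr'_def q by simp
    show "last (path_pts (c - 1, b) p') = last (path_pts (c - 1, b) q')"
      using la unfolding p'_def q'_def qr'_def q by (simp add: last_rep hk)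
    show "set (path_pts (c - 1, b) p') \<inter> set (path_pts (c - 1, b) q') = {(c - 1, b), last (path_pts (c - 1, b) p')}"
      by (rule cap')
    show "P \<union> Pair (c - 1) ` {b..<b + int k} = R (east_starts (c - 1, b) p') (east_starts (c - 1, b) q')"
      by (rule reg)
  qed
  then show "\<exists>p' q'. Inv (P \<union> Pair (c - 1) ` {b..<b + int k}) k (c - 1) b p' q'" by blast
qed

lemma Inv_bad: assumes "Inv P h c b p q" "h < k"
  shows "Fbad (deco_step P k)"
proof -
  obtain pr qr where h: "h \<ge> 1" and lo: "\<forall>x y. (x,y) \<in> P \<longrightarrow> c \<le> x"
    and col: "\<forall>y. (c, y) \<in> P \<longleftrightarrow> b \<le> y \<and> y < b + int h"
    using InvD[OF assms(1)] by metis
  have d: "deco_step P k = P \<union> Pair (c - 1) ` {b..<b + int k}"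
    using Inv_min[OF assms(1)] assms h unfolding deco_step_def by (simp add: Let_def col_set)
  have 1: "(c - 1, b + int k - 1) \<in> deco_step P k" unfolding d using assms h by (simp add: image_iff)
  have 2: "(c - 1 + 1, b) \<in> deco_step P k" unfolding d using col[rule_format, of b] h by simp
  have 3: "(c - 1 + 1, b + int k - 1) \<notin> deco_step P k"
    unfolding d using col[rule_format, of "b + int k - 1"] assms by (simp add: image_iff)
  have 4: "b \<le> b + int k - 1" using assms by simp
  show ?thesis unfolding Fbad_def using 1 2 3 4 by blast
qed

lemma finite_step: "finite P \<Longrightarrow> finite (deco_step P a)"
  unfolding deco_step_def by (simp add: Let_def col_set)

lemma Fbad_step: assumes "Fbad P" "finite P" shows "Fbad (deco_step P a)"
proof -
  obtain x y y' where yy: "y' \<le> y" and i1: "(x,y) \<in> P" and i2: "(x+1,y') \<in> P" and i3: "(x+1,y) \<notin> P"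
    using assms(1) unfolding Fbad_def by blast
  define c where "c = Min (fst ` P)"
  define b where "b = Min {y. (c, y) \<in> P}"
  have ne: "P \<noteq> {}" using i1 by auto
  have cx: "c \<le> x + 1" unfolding c_def using assms(2) i2 by (intro Min_le) force+
  have fin2: "finite {y. (c, y) \<in> P}"
  proof (rule finite_subset)
    show "{y. (c, y) \<in> P} \<subseteq> snd ` P" by force
  qed (use assms(2) in simp)
  have "(x+1,y) \<notin> deco_step P a"
  proof (cases "a = 0")
    case True
    then have d: "deco_step P a = insert (c, b - 1) P" unfolding deco_step_def c_def b_def using ne by (simp add: Let_def)
    have "(x+1,y) \<noteq> (c, b - 1)"
    proof
      assume e: "(x+1,y) = (c, b - 1)"
      then have "b \<le> y'" unfolding b_def using fin2 i2 by (intro Min_le) auto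
      then show False using e yy by simp
    qed
    then show ?thesis unfolding d using i3 by simp
  next
    case False
    then have d: "deco_step P a = P \<union> Pair (c - 1) ` {b..<b + int a}"
      unfolding deco_step_def c_def b_def using ne by (simp add: Let_def col_set)
    show ?thesis unfolding d using i3 cx by (auto simp: image_iff)
  qed
  moreover have "P \<subseteq> deco_step P a" unfolding deco_step_def using ne by (auto simp: Let_def)
  ultimately show ?thesis unfolding Fbad_def using yy i1 i2 by blast
qed

fun hr :: "nat list \<Rightarrow> nat" where
  "hr [] = 0"
| "hr (a # rs) = (if rs = [] then 1 else if a = 0 then Suc (hr rs) else a)"

fun goodr :: "nat list \<Rightarrow> bool" where
  "goodr [] = True"
| "goodr (a # rs) = (goodr rs \<and> (rs \<noteq> [] \<and> a \<noteq> 0 \<longrightarrow> a \<le> hr rs))"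

lemma main_poly: "as \<noteq> [] \<Longrightarrow> finite (deco_of_steps as)
  \<and> (goodr (rev as) \<longrightarrow> (\<exists>c b p q. Inv (deco_of_steps as) (hr (rev as)) c b p q))
  \<and> (\<not> goodr (rev as) \<longrightarrow> Fbad (deco_of_steps as))"
proof (induction as rule: rev_induct)
  case Nil then show ?case by simp
next
  case (snoc a xs)
  have ds: "deco_of_steps (xs @ [a]) = deco_step (deco_of_steps xs) a"
    unfolding deco_of_steps_def by simp
  show ?case
  proof (cases "xs = []")
    case True
    have "deco_of_steps (xs @ [a]) = {(0,0)}" unfolding ds True deco_of_steps_def deco_step_def by simp
    then show ?thesis using Inv_base True by auto
  next
    case False
    let ?P = "deco_of_steps xs"
    have IH: "finite ?P" "goodr (rev xs) \<longrightarrow> (\<exists>c b p q. Inv ?P (hr (rev xs)) c b p q)"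
      "\<not> goodr (rev xs) \<longrightarrow> Fbad ?P" using snoc.IH False by auto
    have rne: "rev xs \<noteq> []" using False by simp
    have g: "goodr (rev (xs @ [a])) = (goodr (rev xs) \<and> (a \<noteq> 0 \<longrightarrow> a \<le> hr (rev xs)))"
      using rne by simp
    have hh: "hr (rev (xs @ [a])) = (if a = 0 then Suc (hr (rev xs)) else a)"
      using rne by simp
    have fin: "finite (deco_of_steps (xs @ [a]))" unfolding ds by (rule finite_step[OF IH(1)])
    show ?thesis
    proof (cases "goodr (rev xs)")
      case gx: True
      then obtain c b p q where I: "Inv ?P (hr (rev xs)) c b p q" using IH(2) by blast
      show ?thesis
      proof (cases "a = 0")
        case True
        then show ?thesis using Inv_elev[OF I] fin unfolding ds g hh using gx by auto
      next
        case a0: False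
        show ?thesis
        proof (cases "a \<le> hr (rev xs)")
          case True
          then show ?thesis using Inv_paste[OF I, of a] a0 fin unfolding ds g hh using gx by auto
        next
          case False
          then show ?thesis using Inv_bad[OF I, of a] a0 fin unfolding ds g hh by auto
        qed
      qed
    next
      case False
      then show ?thesis using Fbad_step[OF _ IH(1)] IH(3) fin unfolding ds g by auto
    qed
  qed
qed



lemma upt_cons': "i \<le> n \<Longrightarrow> [i..<n+1] = i # [i+1..<n+1]"
  by (simp add: upt_conv_Cons)

lemma lemK: "i + 1 + d = n \<Longrightarrow> (\<forall>l. i < l \<and> l \<le> n \<and> c l \<noteq> 0 \<longrightarrow> v \<le> c l + (l - i - 1))
   \<Longrightarrow> v \<le> n - i \<Longrightarrow> v \<le> hr (map c [i+1..<n+1])"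
proof (induction d arbitrary: i v)
  case 0
  then have "[i+1..<n+1] = [i+1]" by simp
  then show ?case using 0 by simp
next
  case (Suc d)
  have e: "[i+1..<n+1] = (i+1) # [i+1+1..<n+1]" using Suc.prems by (intro upt_cons') simp
  have ne: "[i+1+1..<n+1] \<noteq> []" using Suc.prems by simp
  show ?case
  proof (cases "c (i+1) = 0")
    case True
    have "v - 1 \<le> hr (map c [i+1+1..<n+1])"
    proof (rule Suc.IH)
      show "i + 1 + 1 + d = n" using Suc.prems by simp
      show "\<forall>l. i + 1 < l \<and> l \<le> n \<and> c l \<noteq> 0 \<longrightarrow> v - 1 \<le> c l + (l - (i + 1) - 1)"
      proof (intro allI impI)
        fix l assume l: "i + 1 < l \<and> l \<le> n \<and> c l \<noteq> 0"
        then have "v \<le> c l + (l - i - 1)" using Suc.prems(2)[rule_format, of l] by simp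
        then show "v - 1 \<le> c l + (l - (i + 1) - 1)" using l by simp
      qed
      show "v - 1 \<le> n - (i + 1)" using Suc.prems by simp
    qed
    then show ?thesis unfolding e using True ne by simp
  next
    case False
    then show ?thesis unfolding e using ne Suc.prems(1,2) by force
  qed
qed

lemma lemG: "i + 1 + d = j \<Longrightarrow> j \<le> n \<Longrightarrow> c j \<noteq> 0 \<Longrightarrow> goodr (map c [i+1..<n+1])
   \<Longrightarrow> hr (map c [i+1..<n+1]) \<le> c j + (j - i - 1)"
proof (induction d arbitrary: i)
  case 0
  then have e: "[i+1..<n+1] = (i+1) # [i+1+1..<n+1]" by (intro upt_cons') simp
  show ?case unfolding e using 0 by auto
next
  case (Suc d)
  have e: "[i+1..<n+1] = (i+1) # [i+1+1..<n+1]" using Suc.prems by (intro upt_cons') simp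
  have ne: "[i+1+1..<n+1] \<noteq> []" using Suc.prems by simp
  have g: "goodr (map c [i+1+1..<n+1])" and g2: "c (i+1) \<noteq> 0 \<longrightarrow> c (i+1) \<le> hr (map c [i+1+1..<n+1])"
    using Suc.prems(4) ne unfolding e by auto
  have IH: "hr (map c [i+1+1..<n+1]) \<le> c j + (j - (i+1) - 1)"
    using Suc.IH[of "i+1"] Suc.prems g by simp
  show ?case
  proof (cases "c (i+1) = 0")
    case True
    then show ?thesis unfolding e using ne IH Suc.prems(1) by simp
  next
    case False
    then show ?thesis unfolding e using ne IH g2 Suc.prems(1) by simp
  qed
qed

lemma goodr_suffix: "i + d = i' \<Longrightarrow> i' \<le> n + 1 \<Longrightarrow> goodr (map c [i..<n+1]) \<Longrightarrow> goodr (map c [i'..<n+1])"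
proof (induction d arbitrary: i)
  case 0 then show ?case by simp
next
  case (Suc d)
  have e: "[i..<n+1] = i # [i+1..<n+1]" using Suc.prems by (intro upt_cons') simp
  show ?case using Suc.IH[of "i+1"] Suc.prems unfolding e by simp
qed

lemma rev_code: "rev (map f [1..<n+1]) = map (\<lambda>j. f (n + 1 - j)) [1..<n+1]"
  proof (rule nth_equalityI)
  show "length (rev (map f [1..<n+1])) = length (map (\<lambda>j. f (n + 1 - j)) [1..<n+1])" by simp
  fix i assume "i < length (rev (map f [1..<n+1]))"
  then have i: "i < n" by (simp del: upt_Suc)
  have "rev (map f [1..<n+1]) ! i = map f [1..<n+1] ! (n - 1 - i)" using i by (simp add: rev_nth del: upt_Suc)
  also have "\<dots> = f (n - i)" using i by (simp add: Suc_diff_Suc del: upt_Suc)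
  also have "\<dots> = map (\<lambda>j. f (n + 1 - j)) [1..<n+1] ! i" using i by (simp del: upt_Suc)
  finally show "rev (map f [1..<n+1]) ! i = map (\<lambda>j. f (n + 1 - j)) [1..<n+1] ! i" .
qed



lemma S_fin: "finite {j. i < j \<and> j \<le> (n::nat) \<and> P j}"
  by (rule finite_subset[of _ "{..n}"]) auto

lemma P1: "right_inv \<pi> n i \<le> n - i"
proof -
  have "right_inv \<pi> n i \<le> card {i<..n}"
    unfolding right_inv_def by (rule card_mono) auto
  then show ?thesis by simp
qed

lemma P2: assumes "i < l" "l \<le> n" "\<pi> i < \<pi> l"
  shows "right_inv \<pi> n i \<le> (l - i - 1) + right_inv \<pi> n l"
proof -
  have "{j. i < j \<and> j \<le> n \<and> \<pi> j < \<pi> i} \<subseteq> {i<..<l} \<union> {j. l < j \<and> j \<le> n \<and> \<pi> j < \<pi> l}"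
  proof
    fix j assume j: "j \<in> {j. i < j \<and> j \<le> n \<and> \<pi> j < \<pi> i}"
    then have "j \<noteq> l" using assms by auto
    then show "j \<in> {i<..<l} \<union> {j. l < j \<and> j \<le> n \<and> \<pi> j < \<pi> l}" using j assms by auto
  qed
  then have "right_inv \<pi> n i \<le> card ({i<..<l} \<union> {j. l < j \<and> j \<le> n \<and> \<pi> j < \<pi> l})"
    unfolding right_inv_def by (intro card_mono) (simp_all add: S_fin)
  also have "\<dots> \<le> card {i<..<l} + right_inv \<pi> n l" unfolding right_inv_def by (rule card_Un_le)
  finally show ?thesis by simp
qed

lemma P3: assumes "i < j" "j \<le> n" "\<pi> j < \<pi> i" "\<forall>m. i < m \<and> m < j \<longrightarrow> \<pi> m < \<pi> j"
  shows "(j - i) + right_inv \<pi> n j \<le> right_inv \<pi> n i"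
proof -
  have "{i<..j} \<union> {m. j < m \<and> m \<le> n \<and> \<pi> m < \<pi> j} \<subseteq> {m. i < m \<and> m \<le> n \<and> \<pi> m < \<pi> i}"
  proof
    fix m assume m: "m \<in> {i<..j} \<union> {m. j < m \<and> m \<le> n \<and> \<pi> m < \<pi> j}"
    show "m \<in> {m. i < m \<and> m \<le> n \<and> \<pi> m < \<pi> i}"
    proof (cases "m \<le> j")
      case True
      then have "\<pi> m \<le> \<pi> j" using m assms(4)[rule_format, of m] by (cases "m = j") auto
      then show ?thesis using m True assms by auto
    next
      case False then show ?thesis using m assms by auto
    qed
  qed
  then have "card ({i<..j} \<union> {m. j < m \<and> m \<le> n \<and> \<pi> m < \<pi> j}) \<le> right_inv \<pi> n i"
    unfolding right_inv_def by (intro card_mono) (simp_all add: S_fin)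
  moreover have "card ({i<..j} \<union> {m. j < m \<and> m \<le> n \<and> \<pi> m < \<pi> j}) = (j - i) + right_inv \<pi> n j"
    unfolding right_inv_def by (subst card_Un_disjoint) (auto simp: S_fin)
  ultimately show ?thesis by simp
qed

lemma P4: assumes "j < k" "k \<le> n" "\<pi> k < \<pi> j" shows "right_inv \<pi> n j \<noteq> 0"
proof -
  have "k \<in> {m. j < m \<and> m \<le> n \<and> \<pi> m < \<pi> j}" using assms by simp
  then show ?thesis unfolding right_inv_def using S_fin[of j n "\<lambda>m. \<pi> m < \<pi> j"] by (auto simp: card_eq_0_iff)
qed

lemma P5: assumes "right_inv \<pi> n l \<noteq> 0" shows "\<exists>k. l < k \<and> k \<le> n \<and> \<pi> k < \<pi> l"
proof -
  have "{m. l < m \<and> m \<le> n \<and> \<pi> m < \<pi> l} \<noteq> {}" using assms unfolding right_inv_def by (metis card.empty)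
  then show ?thesis by blast
qed

lemma avoid_good: assumes "avoids_321 \<pi> n" "inj \<pi>"
  shows "goodr (map (right_inv \<pi> n) [1..<n+1])"
proof -
  let ?c = "right_inv \<pi> n"
  have "\<forall>i. i + d = n + 1 \<longrightarrow> 1 \<le> i \<longrightarrow> goodr (map ?c [i..<n+1])" for d
  proof (induction d)
    case 0 then show ?case by simp
  next
    case (Suc d)
    show ?case
    proof (intro allI impI)
      fix i assume i: "i + Suc d = n + 1" "1 \<le> i"
      have e: "[i..<n+1] = i # [i+1..<n+1]" using i by (intro upt_cons') simp
      have g: "goodr (map ?c [i+1..<n+1])" using Suc.IH i by simp
      have "?c i \<le> hr (map ?c [i+1..<n+1])" if ne: "[i+1..<n+1] \<noteq> []" and ci: "?c i \<noteq> 0"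
      proof (rule lemK[of i "n - i - 1"])
        show "i + 1 + (n - i - 1) = n" using ne by (simp del: upt_Suc)
        show "?c i \<le> n - i" by (rule P1)
        show "\<forall>l. i < l \<and> l \<le> n \<and> ?c l \<noteq> 0 \<longrightarrow> ?c i \<le> ?c l + (l - i - 1)"
        proof (intro allI impI)
          fix l assume l: "i < l \<and> l \<le> n \<and> ?c l \<noteq> 0"
          then obtain k where k: "l < k" "k \<le> n" "\<pi> k < \<pi> l" using P5 by blast
          have "\<pi> i \<noteq> \<pi> l" using l assms(2) by (metis inj_eq less_irrefl)
          moreover have "\<not> \<pi> i > \<pi> l"
          proof
            assume "\<pi> i > \<pi> l"
            then show False using assms(1) k l i(2) unfolding avoids_321_def by blast
          qed
          ultimately have "\<pi> i < \<pi> l" by simp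
          then show "?c i \<le> ?c l + (l - i - 1)" using P2[of i l n \<pi>] l by simp
        qed
      qed
      then show "goodr (map ?c [i..<n+1])" unfolding e using g by simp
    qed
  qed
  then show ?thesis by simp
qed

lemma good_avoid: assumes "goodr (map (right_inv \<pi> n) [1..<n+1])" "inj \<pi>"
  shows "avoids_321 \<pi> n"
proof (rule ccontr)
  let ?c = "right_inv \<pi> n"
  assume "\<not> avoids_321 \<pi> n"
  then obtain i j k where ijk: "1 \<le> i" "i < j" "j < k" "k \<le> n" "\<pi> i > \<pi> j" "\<pi> j > \<pi> k"
    unfolding avoids_321_def by blast
  define M where "M = {m. 1 \<le> m \<and> m < j \<and> \<pi> m > \<pi> j}"
  have fM: "finite M" unfolding M_def by (rule finite_subset[of _ "{..j}"]) auto
  have iM: "i \<in> M" unfolding M_def using ijk by simp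
  define i' where "i' = Max M"
  have i'M: "i' \<in> M" unfolding i'_def using fM iM by (intro Max_in) auto
  have i'1: "1 \<le> i'" "i' < j" "\<pi> i' > \<pi> j" using i'M unfolding M_def by auto
  have btw: "\<forall>m. i' < m \<and> m < j \<longrightarrow> \<pi> m < \<pi> j"
  proof (intro allI impI)
    fix m assume m: "i' < m \<and> m < j"
    have "m \<notin> M"
    proof
      assume "m \<in> M" then have "m \<le> i'" unfolding i'_def using fM by (simp add: Max_ge)
      then show False using m by simp
    qed
    then have "\<not> \<pi> m > \<pi> j" using m i'1 unfolding M_def by simp
    moreover have "\<pi> m \<noteq> \<pi> j" using m assms(2) by (metis inj_eq less_irrefl)
    ultimately show "\<pi> m < \<pi> j" by simp
  qed
  have P3': "(j - i') + ?c j \<le> ?c i'" using P3[of i' j n \<pi>] i'1 ijk btw by simp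
  have cj: "?c j \<noteq> 0" using P4[of j k n \<pi>] ijk by simp
  have g: "goodr (map ?c [i'..<n+1])" using goodr_suffix[of 1 "i' - 1" i' n ?c] assms(1) i'1 ijk by simp
  have e: "[i'..<n+1] = i' # [i'+1..<n+1]" using i'1 ijk by (intro upt_cons') simp
  have ne: "[i'+1..<n+1] \<noteq> []" using i'1 ijk by simp
  have g1: "goodr (map ?c [i'+1..<n+1])" and g2: "?c i' \<noteq> 0 \<longrightarrow> ?c i' \<le> hr (map ?c [i'+1..<n+1])"
    using g ne unfolding e by auto
  have "hr (map ?c [i'+1..<n+1]) \<le> ?c j + (j - i' - 1)"
    using lemG[of i' "j - i' - 1" j n ?c] i'1 ijk cj g1 by simp
  moreover have "?c i' \<noteq> 0" using P3' i'1 by simp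
  ultimately show False using g2 P3' i'1 by (simp del: upt_Suc)
qed

theorem mainTheorem1:
  fixes n :: nat and \<pi> :: "nat \<Rightarrow> nat"
  assumes "n \<ge> 1" and "\<pi> permutes {1..n}"
  shows "avoids_321 \<pi> n \<longleftrightarrow> parallelogram_polyomino (Phi2 \<pi> n)"
proof -
  let ?c = "right_inv \<pi> n"
  define as where "as = map (\<lambda>j. ?c (n + 1 - j)) [1..<n+1]"
  have inj: "inj \<pi>" using assms(2) by (rule permutes_inj)
  have ph: "Phi2 \<pi> n = deco_of_steps as" unfolding Phi2_def as_def by simp
  have ra: "rev as = map ?c [1..<n+1]" unfolding as_def rev_code[symmetric] by simp
  have ne: "as \<noteq> []" unfolding as_def using assms(1) by simp
  have M: "goodr (rev as) \<longrightarrow> (\<exists>c b p q. Inv (deco_of_steps as) (hr (rev as)) c b p q)"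
     "\<not> goodr (rev as) \<longrightarrow> Fbad (deco_of_steps as)" using main_poly[OF ne] by auto
  have eq: "avoids_321 \<pi> n \<longleftrightarrow> goodr (rev as)"
    unfolding ra using avoid_good[OF _ inj] good_avoid[OF _ inj] by blast
  show ?thesis
  proof (cases "goodr (rev as)")
    case True
    then show ?thesis unfolding ph eq using M(1) Inv_para by blast
  next
    case False
    then show ?thesis unfolding ph eq using M(2) Fbad_not_para by blast
  qed
qed

end
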